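(* Assume $f_0,f_1\in \mathrm{PL}_0(\mathbf{I})$ generate a standard isomorphic copy of $F$. Let $(a,c)$ be an orbital of $f_0$ and let $(b_1,d_1),\dots,(b_n,d_n)$ be the orbitals of $f_1$ contained in $(a,c)$, in increasing order. If $(a,c)$ is an up-bump of $f_0$ and $r$ is the minimal number in $(a,c)$ with $rf_0=rf_1$, then $b_1f_0\ge r$. If $(a,c)$ is a down-bump of $f_0$ and $r$ is the maximal number in $(a,c)$ with $rf_0=rf_1$, then $d_nf_0\le r$.
   Context: $\mathrm{PL}_0(\mathbf{I})$ is the group of orientation-preserving piecewise-linear homeomorphisms of $[0,1]$ with finitely many points of non-differentiability; functions act on the right ($tf=f(t)$). The orbitals of $f$ are the connected components (open intervals) of $\operatorname{Supp}(f)=\{x: xf\ne x\}$; an orbital $A$ is an up-bump (resp. down-bump) if $xf>x$ (resp. $xf<x$) for all $x\in A$. Thompson's group $F=\langle x_0,x_1\mid [x_0x_1^{-1},x_1^{x_0}]=[x_0x_1^{-1},x_1^{x_0^2}]=1\rangle$, with $a^b=b^{-1}ab$, $[a,b]=aba^{-1}b^{-1}$; $f_0,f_1$ generate a standard isomorphic copy of $F$ if $\langle f_0,f_1\rangle\cong F$ via an isomorphism with $x_0\mapsto f_0$, $x_1\mapsto f_1$. *)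

theory Defs
  imports "HOL-Analysis.Analysis"
begin

text \<open>Elements of PL_0(I) are represented as functions real => real that are the
identity outside [0,1]; the right action t f is the function value f t.\<close>

definition PL0 :: "(real \<Rightarrow> real) \<Rightarrow> bool" where
  "PL0 f \<longleftrightarrow>
     (\<forall>x. x \<notin> {0..1} \<longrightarrow> f x = x) \<and>
     f ` {0..1} = {0..1} \<and>
     continuous_on {0..1} f \<and>
     strict_mono_on {0..1} f \<and>
     (\<exists>ts::real list. sorted_wrt (<) ts \<and> ts \<noteq> [] \<and> hd ts = 0 \<and> last ts = 1 \<and>
        (\<forall>i. Suc i < length ts \<longrightarrow>
           (\<exists>m k. \<forall>x\<in>{ts!i..ts!Suc i}. f x = m * x + k)))"

definition supp :: "(real \<Rightarrow> real) \<Rightarrow> real set" where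
  "supp f = {x. f x \<noteq> x}"

definition orbital :: "(real \<Rightarrow> real) \<Rightarrow> real \<Rightarrow> real \<Rightarrow> bool" where
  "orbital f a c \<longleftrightarrow> a < c \<and> {a<..<c} \<in> components (supp f)"

definition up_bump :: "(real \<Rightarrow> real) \<Rightarrow> real \<Rightarrow> real \<Rightarrow> bool" where
  "up_bump f a c \<longleftrightarrow> orbital f a c \<and> (\<forall>x\<in>{a<..<c}. f x > x)"

definition down_bump :: "(real \<Rightarrow> real) \<Rightarrow> real \<Rightarrow> real \<Rightarrow> bool" where
  "down_bump f a c \<longleftrightarrow> orbital f a c \<and> (\<forall>x\<in>{a<..<c}. f x < x)"

text \<open>Words in the generators x0, x1 and their inverses: a letter is
  (generator, is_inverse), generator False = x0, True = x1.\<close>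
type_synonym letter = "bool \<times> bool"

definition winv :: "letter list \<Rightarrow> letter list" where
  "winv w = rev (map (\<lambda>(g, e). (g, \<not> e)) w)"

definition X0 :: "letter list" where "X0 = [(False, False)]"
definition X1 :: "letter list" where "X1 = [(True, False)]"

definition wconj :: "letter list \<Rightarrow> letter list \<Rightarrow> letter list" where
  "wconj a b = winv b @ a @ b"
definition wcomm :: "letter list \<Rightarrow> letter list \<Rightarrow> letter list" where
  "wcomm a b = a @ b @ winv a @ winv b"

definition rel1 :: "letter list" where
  "rel1 = wcomm (X0 @ winv X1) (wconj X1 X0)"
definition rel2 :: "letter list" where
  "rel2 = wcomm (X0 @ winv X1) (wconj X1 (X0 @ X0))"

text \<open>Equality of words in Thompson's group F, i.e. the congruence on words generated
  by free cancellation and the two defining relators.\<close>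
inductive F_eq :: "letter list \<Rightarrow> letter list \<Rightarrow> bool" where
  F_refl: "F_eq u u"
| F_sym: "F_eq u v \<Longrightarrow> F_eq v u"
| F_trans: "F_eq u v \<Longrightarrow> F_eq v w \<Longrightarrow> F_eq u w"
| F_cong: "F_eq u u' \<Longrightarrow> F_eq v v' \<Longrightarrow> F_eq (u @ v) (u' @ v')"
| F_cancel: "F_eq [(g, e), (g, \<not> e)] []"
| F_rel1: "F_eq rel1 []"
| F_rel2: "F_eq rel2 []"

text \<open>Evaluation of a word with x0 |-> f0, x1 |-> f1, using right actions:
  t(fg) = (tf)g, i.e. the product fg is the function g o f.\<close>
definition letter_val :: "(real \<Rightarrow> real) \<Rightarrow> (real \<Rightarrow> real) \<Rightarrow> letter \<Rightarrow> (real \<Rightarrow> real)" where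
  "letter_val f0 f1 l = (let h = (if fst l then f1 else f0) in if snd l then inv h else h)"

fun word_val :: "(real \<Rightarrow> real) \<Rightarrow> (real \<Rightarrow> real) \<Rightarrow> letter list \<Rightarrow> (real \<Rightarrow> real)" where
  "word_val f0 f1 [] = id"
| "word_val f0 f1 (l # w) = word_val f0 f1 w \<circ> letter_val f0 f1 l"

text \<open>f0, f1 generate a standard isomorphic copy of F: x0 |-> f0, x1 |-> f1 induces
  a well-defined injective homomorphism from F (onto the group generated by f0, f1).\<close>
definition standard_F_copy :: "(real \<Rightarrow> real) \<Rightarrow> (real \<Rightarrow> real) \<Rightarrow> bool" where
  "standard_F_copy f0 f1 \<longleftrightarrow>
     (\<forall>u v. F_eq u v \<longleftrightarrow> word_val f0 f1 u = word_val f0 f1 v)"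

end

theory Submission imports Defs begin


lemma smono_inv:
  assumes "strict_mono (f::real\<Rightarrow>real)" "surj f" shows "strict_mono (inv f)"
proof (rule strict_monoI)
  fix x y :: real assume "x < y"
  have "f (inv f x) = x" "f (inv f y) = y" using assms(2) by (simp_all add: surj_f_inv_f)
  then show "inv f x < inv f y" using \<open>x<y\<close> assms(1) by (metis strict_mono_less)
qed

lemma comp_endpoints:
  fixes f :: "real \<Rightarrow> real"
  assumes cont: "continuous_on UNIV f" and comp: "{b<..<d} \<in> components (supp f)" and bd: "b < d"
  shows "f b = b" "f d = d"
proof -
  have op: "open (supp f)" unfolding supp_def
    by (rule open_Collect_neq[OF cont]) (rule continuous_on_id)
  have sub: "{b<..<d} \<subseteq> supp f" using comp in_components_subset by blast
  have max: "\<And>D. D \<noteq> {} \<Longrightarrow> {b<..<d} \<subseteq> D \<Longrightarrow> D \<subseteq> supp f \<Longrightarrow> connected D \<Longrightarrow> D = {b<..<d}"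
    using comp unfolding in_components_maximal by blast
  show "f b = b"
  proof (rule ccontr)
    assume "f b \<noteq> b"
    then have "b \<in> supp f" by (simp add: supp_def)
    then obtain e where e: "e > 0" "ball b e \<subseteq> supp f" using op openE by blast
    let ?D = "ball b e \<union> {b<..<d}"
    have "min (b + e/2) ((b+d)/2) \<in> ball b e \<inter> {b<..<d}"
      unfolding Int_iff mem_ball greaterThanLessThan_iff dist_real_def min_def using e(1) bd by (auto simp: abs_if)
    then have "connected ?D" by (intro connected_Un) auto
    then have "?D = {b<..<d}" using max[of ?D] e sub by auto
    moreover have "b \<in> ?D" using e by auto
    ultimately show False by auto
  qed
  show "f d = d"
  proof (rule ccontr)
    assume "f d \<noteq> d"
    then have "d \<in> supp f" by (simp add: supp_def)
    then obtain e where e: "e > 0" "ball d e \<subseteq> supp f" using op openE by blast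
    let ?D = "ball d e \<union> {b<..<d}"
    have "max (d - e/2) ((b+d)/2) \<in> ball d e \<inter> {b<..<d}"
    proof -
      define p where "p = max (d - e/2) ((b+d)/2)"
      have "b < p" "p < d" "d - p < e" unfolding p_def max_def using e(1) bd by (auto simp: field_simps)
      then show ?thesis unfolding p_def[symmetric] by (auto simp: mem_ball dist_real_def abs_if)
    qed
    then have "connected ?D" by (intro connected_Un) auto
    then have "?D = {b<..<d}" using max[of ?D] e sub by auto
    moreover have "d \<in> ?D" using e by auto
    ultimately show False by auto
  qed
qed

lemma cover_list:
  fixes ts :: "real list"
  shows "sorted ts \<Longrightarrow> 2 \<le> length ts \<Longrightarrow> hd ts \<le> y \<Longrightarrow> y \<le> last ts \<Longrightarrow>
    \<exists>i. Suc i < length ts \<and> ts!i \<le> y \<and> y \<le> ts!Suc i"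
proof (induction ts)
  case Nil then show ?case by simp
next
  case (Cons x xs)
  then obtain z zs where xs: "xs = z # zs" by (cases xs) auto
  show ?case
  proof (cases "y \<le> z")
    case True then show ?thesis using Cons xs by (intro exI[of _ 0]) auto
  next
    case False
    show ?thesis
    proof (cases zs)
      case Nil then show ?thesis using Cons xs False by auto
    next
      case (Cons u us)
      have "\<exists>i. Suc i < length xs \<and> xs!i \<le> y \<and> y \<le> xs!Suc i"
        using Cons.IH Cons.prems xs False Cons by auto
      then obtain i where "Suc i < length xs \<and> xs!i \<le> y \<and> y \<le> xs!Suc i" by blast
      then show ?thesis by (intro exI[of _ "Suc i"]) auto
    qed
  qed
qed

lemma PL0_props:
  fixes f :: "real \<Rightarrow> real"
  assumes "PL0 f"
  shows "strict_mono f" "surj f" "continuous_on UNIV f" "supp f \<subseteq> {0<..<1}"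
    "\<exists>ts. (\<forall>y\<in>{0..1}. \<exists>i. Suc i < length ts \<and> ts!i \<le> y \<and> y \<le> ts!Suc i) \<and>
       (\<forall>i. Suc i < length ts \<longrightarrow> (\<exists>m k. \<forall>x\<in>{ts!i..ts!Suc i}. f x = m*x+k))"
proof -
  have out: "\<And>x. x \<notin> {0..1} \<Longrightarrow> f x = x" and im: "f ` {0..1} = {0..1}"
    and co: "continuous_on {0..1} f" and sm: "strict_mono_on {0..1} f"
    using assms unfolding PL0_def by auto
  obtain ts :: "real list" where ts: "sorted_wrt (<) ts" "ts \<noteq> []" "hd ts = 0" "last ts = 1"
    "\<forall>i. Suc i < length ts \<longrightarrow> (\<exists>m k. \<forall>x\<in>{ts!i..ts!Suc i}. f x = m * x + k)"
    using assms unfolding PL0_def by blast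
  have f01: "\<And>x. x \<in> {0..1} \<Longrightarrow> f x \<in> {0..1}" using im by auto
  have f0: "f 0 = 0"
  proof -
    obtain t where t: "t \<in> {0..1}" "f t = 0" using im by (metis atLeastAtMost_iff image_iff order_refl zero_le_one)
    have "f 0 \<le> f t"
    proof (cases "t = 0")
      case False then show ?thesis using strict_mono_onD[OF sm, of 0 t] t by auto
    qed (use t in auto)
    then show ?thesis using f01[of 0] t by auto
  qed
  have f1: "f 1 = 1"
  proof -
    obtain t where t: "t \<in> {0..1}" "f t = 1" using im by (metis atLeastAtMost_iff image_iff order_refl zero_le_one)
    have "f t \<le> f 1"
    proof (cases "t = 1")
      case False then show ?thesis using strict_mono_onD[OF sm, of t 1] t by auto
    qed (use t in auto)
    then show ?thesis using f01[of 1] t by auto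
  qed
  show smf: "strict_mono f"
  proof (rule strict_monoI)
    fix x y :: real assume xy: "x < y"
    consider "x < 0" | "x \<in> {0..1}" | "1 < x" by force
    then show "f x < f y"
    proof cases
      case 1
      then show ?thesis using xy out f01[of y] out[of y] by (cases "y \<in> {0..1}") auto
    next
      case 2
      show ?thesis
      proof (cases "y \<in> {0..1}")
        case True then show ?thesis using sm 2 xy by (auto simp: strict_mono_on_def)
      next
        case False
        then have "1 < y" using 2 xy by auto
        moreover have "f x \<le> 1" using f01 2 by auto
        ultimately show ?thesis using out False by auto
      qed
    next
      case 3 then show ?thesis using xy out by auto
    qed
  qed
  show "surj f"
  proof -
    have "y \<in> range f" for y
    proof (cases "y \<in> {0..1}")
      case True then have "y \<in> f ` {0..1}" using im by simp
      then show ?thesis by blast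
    next
      case False then have "f y = y" using out by auto
      then show ?thesis by (metis rangeI)
    qed
    then show ?thesis by auto
  qed
  show "continuous_on UNIV f"
  proof -
    have e1: "\<And>x. x \<in> {..0} \<Longrightarrow> f x = id x" using out f0 by (case_tac "x = 0") auto
    have c1: "continuous_on {..0} f"
      by (subst continuous_on_cong[OF refl e1]) simp_all
    have e2: "\<And>x. x \<in> {1..} \<Longrightarrow> f x = id x" using out f1 by (case_tac "x = 1") auto
    have c2: "continuous_on {1..} f"
      by (subst continuous_on_cong[OF refl e2]) simp_all
    have "continuous_on ({..0} \<union> {0..1} \<union> {1..}) f"
      by (intro continuous_on_closed_Un c1 c2 co) auto
    moreover have "{..0} \<union> {0..1} \<union> {1..} = (UNIV::real set)" by auto
    ultimately show ?thesis by simp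
  qed
  show "supp f \<subseteq> {0<..<1}"
    using out f0 f1 by (force simp: supp_def)
  have len: "2 \<le> length ts"
  proof (rule ccontr)
    assume "\<not> 2 \<le> length ts"
    then have "length ts = 1" using ts(2) by (cases "length ts") auto
    then obtain u where "ts = [u]" by (metis length_0_conv length_Suc_conv One_nat_def)
    then show False using ts by auto
  qed
  have "\<forall>y\<in>{0..1}. \<exists>i. Suc i < length ts \<and> ts!i \<le> y \<and> y \<le> ts!Suc i"
    using cover_list[of ts] ts len sorted_wrt_mono_rel[of ts "(<)" "(\<le>)"] by auto
  then show "\<exists>ts. (\<forall>y\<in>{0..1}. \<exists>i. Suc i < length ts \<and> ts!i \<le> y \<and> y \<le> ts!Suc i) \<and>
       (\<forall>i. Suc i < length ts \<longrightarrow> (\<exists>m k. \<forall>x\<in>{ts!i..ts!Suc i}. f x = m*x+k))"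
    using ts(5) by blast
qed

lemma rels:
  assumes "standard_F_copy f0 f1"
  shows "word_val f0 f1 rel1 = id" "word_val f0 f1 rel2 = id"
  using assms F_rel1 F_rel2 unfolding standard_F_copy_def by auto



lemma core_up:
  fixes f0 f1 :: "real \<Rightarrow> real" and ts :: "real list"
  assumes sm0: "strict_mono f0" and sm1: "strict_mono f1"
    and s0: "surj f0" and s1: "surj f1"
    and cont0: "continuous_on UNIV f0" and cont1: "continuous_on UNIV f1"
    and comm1: "\<And>x. inv f1 (f0 (f0 (f1 (inv f0 x)))) = f0 (f1 (inv f0 (inv f1 (f0 x))))"
    and comm2: "\<And>x. inv f1 (f0 (f0 (f0 (f1 (inv f0 (inv f0 x)))))) = f0 (f0 (f1 (inv f0 (inv f0 (inv f1 (f0 x))))))"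
    and pa: "\<forall>y\<in>{0..1}. \<exists>i. Suc i < length ts \<and> ts!i \<le> y \<and> y \<le> ts!Suc i"
    and pa2: "\<forall>i. Suc i < length ts \<longrightarrow> (\<exists>m k. \<forall>x\<in>{ts!i..ts!Suc i}. f1 x = m*x+k)"
    and up: "\<forall>x\<in>{a<..<c}. f0 x > x" and fa: "f0 a = a"
    and r: "a < r" "r < c" "f0 r = f1 r" and rmin: "\<forall>s\<in>{a<..<c}. f0 s = f1 s \<longrightarrow> r \<le> s"
    and fb: "f1 b1 = b1" and fd: "f1 d1 = d1" and sub: "{b1<..<d1} \<subseteq> supp f1"
    and bd: "a \<le> b1" "b1 < d1" "d1 \<le> c" and a0: "0 \<le> a" and c1: "c \<le> 1"
  shows "r \<le> f0 b1"
proof (rule ccontr)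
  assume "\<not> r \<le> f0 b1" hence eb: "f0 b1 < r" by simp
  have inj0: "inj f0" and inj1: "inj f1" using sm0 sm1 strict_mono_imp_inj_on by auto
  have i0[simp]: "\<And>x. inv f0 (f0 x) = x" using inj0 by (simp add: inv_f_f)
  have i0'[simp]: "\<And>x. f0 (inv f0 x) = x" using s0 by (simp add: surj_f_inv_f)
  have i1[simp]: "\<And>x. inv f1 (f1 x) = x" using inj1 by (simp add: inv_f_f)
  have i1'[simp]: "\<And>x. f1 (inv f1 x) = x" using s1 by (simp add: surj_f_inv_f)
  have smi0: "strict_mono (inv f0)" by (rule smono_inv[OF sm0 s0])
  have smi1: "strict_mono (inv f1)" by (rule smono_inv[OF sm1 s1])
  note m0[simp] = strict_mono_less[OF sm0] and m1[simp] = strict_mono_less[OF sm1]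
    and mi0[simp] = strict_mono_less[OF smi0] and mi1[simp] = strict_mono_less[OF smi1]
  note e0[simp] = strict_mono_eq[OF sm0] and e1[simp] = strict_mono_eq[OF sm1]
    and ei0[simp] = strict_mono_eq[OF smi0] and ei1[simp] = strict_mono_eq[OF smi1]
  define g where "g x = inv f1 (f0 x)" for x
  define k where "k x = f0 (f1 (inv f0 x))" for x
  define k2 where "k2 x = f0 (f0 (f1 (inv f0 (inv f0 x))))" for x
  have gk: "g (k x) = k (g x)" for x using comm1 by (simp add: g_def k_def)
  have gk2: "g (k2 x) = k2 (g x)" for x using comm2 by (simp add: g_def k2_def)
  have gless[simp]: "g x < g y \<longleftrightarrow> x < y" for x y by (simp add: g_def)
  have geq[simp]: "g x = g y \<longleftrightarrow> x = y" for x y by (simp add: g_def)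
  have k2less[simp]: "k2 x < k2 y \<longleftrightarrow> x < y" for x y by (simp add: k2_def)
  have k2eq[simp]: "k2 x = k2 y \<longleftrightarrow> x = y" for x y by (simp add: k2_def)
  have gfix: "g y = y \<longleftrightarrow> f0 y = f1 y" for y by (metis g_def i1 i1')
  have r_not: "\<forall>s\<in>{a<..<r}. f0 s \<noteq> f1 s" using rmin r by force
  have fr: "r < f0 r" using up r(1,2) by auto
  have ir: "inv f0 r < r" using fr by (metis i0 mi0)
  show False
  proof (cases "a < b1")
    case True
    have b1ac: "b1 \<in> {a<..<c}" using True bd by auto
    have e1': "b1 < f0 b1" using up b1ac by auto
    have pos: "f1 y < f0 y" if "b1 \<le> y" "y < r" for y
    proof (rule ccontr)
      assume "\<not> f1 y < f0 y"
      hence "f0 y \<le> f1 y" by simp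
      have "continuous_on {b1..y} (\<lambda>x. f1 x - f0 x)"
        by (intro continuous_on_diff continuous_on_subset[OF cont1] continuous_on_subset[OF cont0]) auto
      then have "\<exists>s. b1 \<le> s \<and> s \<le> y \<and> (\<lambda>x. f1 x - f0 x) s = 0"
        using \<open>f0 y \<le> f1 y\<close> that e1' fb by (intro IVT') auto
      then obtain s where s: "b1 \<le> s" "s \<le> y" "f1 s = f0 s" by auto
      have "s \<noteq> b1" using s e1' fb by auto
      then have "s \<in> {a<..<r}" using s True that by auto
      then have "f0 s \<noteq> f1 s" using r_not by blast
      with s(3) show False by simp
    qed
    have gup: "y < g y \<and> g y < r" if "b1 \<le> y" "y < r" for y
    proof
      show "y < g y" using pos[OF that] unfolding g_def by (metis i1 mi1)
      show "g y < r" using that r(3) unfolding g_def by (metis i1 m0 mi1)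
    qed
    define e where "e = f0 b1"
    define q where "q n = (g ^^ n) e" for n
    have q_Suc: "q (Suc n) = g (q n)" for n by (simp add: q_def)
    have q0: "q 0 = e" by (simp add: q_def)
    have qrange: "e \<le> q n \<and> q n < r" for n
    proof (induction n)
      case 0 then show ?case using eb by (simp add: q0 e_def)
    next
      case (Suc n)
      then have "b1 \<le> q n" using e1' e_def by auto
      then show ?case using gup[of "q n"] Suc by (auto simp: q_Suc)
    qed
    have qinc: "q n < q (Suc n)" for n
      using gup[of "q n"] qrange[of n] e1' e_def by (auto simp: q_Suc)
    have qmono: "strict_mono q" by (rule strict_monoI_Suc) (rule qinc)
    have kq: "k (q n) = q n" for n
    proof (induction n)
      case 0 then show ?case by (simp add: q0 e_def k_def fb)
    next
      case (Suc n) then show ?case by (metis gk q_Suc)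
    qed
    define p where "p n = inv f0 (q n)" for n
    have pfix: "f1 (p n) = p n" for n using kq[of n] unfolding k_def p_def by (metis i0)
    have pless: "p n < p m \<longleftrightarrow> n < m" for n m
      unfolding p_def using strict_mono_less[OF qmono] by simp
    have p0: "p 0 = b1" by (simp add: p_def q0 e_def)
    have p1: "d1 \<le> p 1"
    proof (rule ccontr)
      assume "\<not> d1 \<le> p 1"
      moreover have "b1 < p 1" using pless[of 0 1] p0 by simp
      ultimately have "p 1 \<in> supp f1" using sub by auto
      then show False using pfix by (simp add: supp_def)
    qed
    define x0 where "x0 = (b1 + d1)/2"
    have x0a: "b1 < x0" "x0 < d1" using bd unfolding x0_def by auto
    have x0: "b1 < x0" "x0 < p 1" "f1 x0 \<noteq> x0"
      using x0a p1 sub unfolding supp_def by auto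
    define w where "w n = (g ^^ n) (f0 x0)" for n
    have w_Suc: "w (Suc n) = g (w n)" for n by (simp add: w_def)
    have w0: "w 0 = f0 x0" by (simp add: w_def)
    have wq: "q n < w n \<and> w n < q (Suc n)" for n
    proof (induction n)
      case 0
      have "f0 x0 < f0 (p 1)" using x0 by simp
      then have "f0 x0 < q 1" by (simp add: p_def)
      then show ?case using x0 by (simp add: w0 q0 e_def)
    next
      case (Suc n) then show ?case by (simp add: w_Suc q_Suc[of "Suc n"] q_Suc[of n])
    qed
    have kw: "k (w n) \<noteq> w n" for n
    proof (induction n)
      case 0 then show ?case using x0 by (simp add: w0 k_def)
    next
      case (Suc n) then show ?case by (simp add: w_Suc gk[symmetric])
    qed
    define z where "z n = inv f0 (w n)" for n
    have zp: "p n < z n \<and> z n < p (Suc n)" for n using wq[of n] by (simp add: z_def p_def)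
    have zfix: "f1 (z n) \<noteq> z n" for n
    proof
      assume "f1 (z n) = z n"
      then have "k (w n) = w n" by (simp add: k_def z_def)
      then show False using kw by simp
    qed
    have prange: "p n \<in> {0..1}" for n
    proof -
      have "b1 \<le> p n" using pless[of 0 n] p0 by (cases n) auto
      moreover have "p n < r" using qrange[of n] ir unfolding p_def
        by (meson less_trans mi0)
      ultimately show ?thesis using a0 bd r c1 by auto
    qed
    define piece where "piece n = (SOME i. Suc i < length ts \<and> ts!i \<le> p n \<and> p n \<le> ts!Suc i)" for n
    have piece: "Suc (piece n) < length ts \<and> ts!(piece n) \<le> p n \<and> p n \<le> ts!Suc (piece n)" for n
    proof -
      have "\<exists>i. Suc i < length ts \<and> ts!i \<le> p n \<and> p n \<le> ts!Suc i" using pa prange by blast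
      then show ?thesis unfolding piece_def by (rule someI_ex)
    qed
    have noteq: "piece n \<noteq> piece m" if "n < m" for n m
    proof
      assume eq: "piece n = piece m"
      obtain mm kk where aff: "\<forall>x\<in>{ts!piece n..ts!Suc (piece n)}. f1 x = mm*x+kk"
        using pa2 piece by blast
      have A1: "f1 (p n) = mm * p n + kk" using aff piece by auto
      have A2: "f1 (p m) = mm * p m + kk" using aff piece[of m] eq by auto
      have lt: "p n < p m" using pless that by simp
      have "p (Suc n) \<le> p m" using pless[of "Suc n" m] that by (cases "Suc n = m") auto
      then have zin: "z n \<in> {ts!piece n..ts!Suc (piece n)}"
        using zp[of n] piece[of n] piece[of m] eq lt by auto
      have A3: "f1 (z n) = mm * z n + kk" using aff zin by auto
      have "mm * p n + kk = p n" "mm * p m + kk = p m" using A1 A2 pfix by auto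
      then have "(mm - 1) * (p m - p n) = 0" by (simp add: algebra_simps)
      then have "mm = 1" using lt by simp
      then have "kk = 0" using A1 pfix[of n] by simp
      then show False using A3 zfix[of n] \<open>mm = 1\<close> by simp
    qed
    have "inj piece"
      unfolding inj_def by (metis noteq linorder_neq_iff)
    then have "infinite (range piece)" by (rule range_inj_infinite)
    moreover have "range piece \<subseteq> {..<length ts}" using piece by (auto dest: Suc_lessD)
    ultimately show False using finite_subset by blast
  next
    case False
    then have ab: "b1 = a" using bd by simp
    have f1a: "f1 a = a" using fb ab by simp
    have ia: "inv f0 a = a" using fa by (metis i0)
    have ga: "g a = a" using fa f1a by (metis g_def i1)
    have k2a: "k2 a = a" by (simp add: k2_def ia f1a fa)
    have kmove: "k y \<noteq> y" if "a < y" "y < f0 d1" for y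
    proof
      assume ky: "k y = y"
      have "a < inv f0 y" using that ia by (metis mi0)
      moreover have "inv f0 y < d1" using that by (metis i0 mi0)
      ultimately have "f1 (inv f0 y) \<noteq> inv f0 y" using sub ab by (auto simp: supp_def)
      moreover have "f0 (f1 (inv f0 y)) = y" using ky by (simp add: k_def)
      ultimately show False by (metis i0)
    qed
    have kd: "k (f0 d1) = f0 d1" by (simp add: k_def fd)
    have A: "r \<le> f0 d1"
    proof (rule ccontr)
      assume "\<not> r \<le> f0 d1"
      then have y0r: "f0 d1 < r" by simp
      have y0a: "a < f0 d1" using bd ab fa by (metis m0)
      have "g (f0 d1) \<noteq> f0 d1" using gfix r_not y0r y0a by auto
      then consider "g (f0 d1) < f0 d1" | "f0 d1 < g (f0 d1)" by linarith
      then show False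
      proof cases
        case 1
        have "a < g (f0 d1)" using y0a ga by (metis gless)
        moreover have "k (g (f0 d1)) = g (f0 d1)" using gk kd by metis
        ultimately show False using kmove 1 by blast
      next
        case 2
        define y where "y = inv f0 (f1 (f0 d1))"
        have gy: "g y = f0 d1" by (simp add: y_def g_def)
        have "y < f0 d1" using 2 gy by (metis gless)
        moreover have "a < y" using y0a gy ga by (metis gless)
        moreover have "g (k y) = g y" using gk[of y] gy kd by simp
        then have "k y = y" by simp
        ultimately show False using kmove by blast
      qed
    qed
    have k2move: "k2 r \<noteq> r"
    proof
      assume kr: "k2 r = r"
      define u where "u = inv f0 (inv f0 r)"
      have "a < inv f0 r" using r ia by (metis mi0)
      then have ua: "a < u" using ia unfolding u_def by (metis mi0)
      have "inv f0 r < f0 d1" using ir A by simp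
      then have ud: "u < d1" unfolding u_def by (metis i0 mi0)
      have "f1 u \<noteq> u" using ua ud sub ab by (auto simp: supp_def)
      moreover have "f0 (f0 (f1 u)) = f0 (f0 u)" using kr by (simp add: k2_def u_def)
      ultimately show False by simp
    qed
    have gr: "g r = r" using gfix r by simp
    consider "k2 r < r" | "r < k2 r" using k2move by linarith
    then show False
    proof cases
      case 1
      have "a < k2 r" using r k2a by (metis k2less)
      moreover have "g (k2 r) = k2 r" using gk2 gr by metis
      ultimately show False using r_not 1 gfix by auto
    next
      case 2
      define y where "y = f0 (f0 (inv f1 (inv f0 (inv f0 r))))"
      have ky: "k2 y = r" by (simp add: y_def k2_def)
      have "y < r" using 2 ky by (metis k2less)
      moreover have "a < y" using ky k2a r by (metis k2less)
      moreover have "g y = y" using gk2[of y] ky gr by simp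
      ultimately show False using r_not gfix by auto
    qed
  qed
qed



lemma core_down:
  fixes f0 f1 :: "real \<Rightarrow> real" and ts :: "real list"
  assumes sm0: "strict_mono f0" and sm1: "strict_mono f1"
    and s0: "surj f0" and s1: "surj f1"
    and cont0: "continuous_on UNIV f0" and cont1: "continuous_on UNIV f1"
    and comm1: "\<And>x. inv f1 (f0 (f0 (f1 (inv f0 x)))) = f0 (f1 (inv f0 (inv f1 (f0 x))))"
    and comm2: "\<And>x. inv f1 (f0 (f0 (f0 (f1 (inv f0 (inv f0 x)))))) = f0 (f0 (f1 (inv f0 (inv f0 (inv f1 (f0 x))))))"
    and pa: "\<forall>y\<in>{0..1}. \<exists>i. Suc i < length ts \<and> ts!i \<le> y \<and> y \<le> ts!Suc i"
    and pa2: "\<forall>i. Suc i < length ts \<longrightarrow> (\<exists>m k. \<forall>x\<in>{ts!i..ts!Suc i}. f1 x = m*x+k)"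
    and down: "\<forall>x\<in>{a<..<c}. f0 x < x" and fc: "f0 c = c"
    and r: "a < r" "r < c" "f0 r = f1 r" and rmax: "\<forall>s\<in>{a<..<c}. f0 s = f1 s \<longrightarrow> s \<le> r"
    and fb: "f1 bn = bn" and fd: "f1 dn = dn" and sub: "{bn<..<dn} \<subseteq> supp f1"
    and bd: "a \<le> bn" "bn < dn" "dn \<le> c" and a0: "0 \<le> a" and c1: "c \<le> 1"
  shows "f0 dn \<le> r"
proof (rule ccontr)
  assume "\<not> f0 dn \<le> r" hence eb: "r < f0 dn" by simp
  have inj0: "inj f0" and inj1: "inj f1" using sm0 sm1 strict_mono_imp_inj_on by auto
  have i0[simp]: "\<And>x. inv f0 (f0 x) = x" using inj0 by (simp add: inv_f_f)
  have i0'[simp]: "\<And>x. f0 (inv f0 x) = x" using s0 by (simp add: surj_f_inv_f)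
  have i1[simp]: "\<And>x. inv f1 (f1 x) = x" using inj1 by (simp add: inv_f_f)
  have i1'[simp]: "\<And>x. f1 (inv f1 x) = x" using s1 by (simp add: surj_f_inv_f)
  have smi0: "strict_mono (inv f0)" by (rule smono_inv[OF sm0 s0])
  have smi1: "strict_mono (inv f1)" by (rule smono_inv[OF sm1 s1])
  note m0[simp] = strict_mono_less[OF sm0] and m1[simp] = strict_mono_less[OF sm1]
    and mi0[simp] = strict_mono_less[OF smi0] and mi1[simp] = strict_mono_less[OF smi1]
  note e0[simp] = strict_mono_eq[OF sm0] and e1[simp] = strict_mono_eq[OF sm1]
    and ei0[simp] = strict_mono_eq[OF smi0] and ei1[simp] = strict_mono_eq[OF smi1]
  define g where "g x = inv f1 (f0 x)" for x
  define k where "k x = f0 (f1 (inv f0 x))" for x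
  define k2 where "k2 x = f0 (f0 (f1 (inv f0 (inv f0 x))))" for x
  have gk: "g (k x) = k (g x)" for x using comm1 by (simp add: g_def k_def)
  have gk2: "g (k2 x) = k2 (g x)" for x using comm2 by (simp add: g_def k2_def)
  have gless[simp]: "g x < g y \<longleftrightarrow> x < y" for x y by (simp add: g_def)
  have geq[simp]: "g x = g y \<longleftrightarrow> x = y" for x y by (simp add: g_def)
  have k2less[simp]: "k2 x < k2 y \<longleftrightarrow> x < y" for x y by (simp add: k2_def)
  have k2eq[simp]: "k2 x = k2 y \<longleftrightarrow> x = y" for x y by (simp add: k2_def)
  have gfix: "g y = y \<longleftrightarrow> f0 y = f1 y" for y by (metis g_def i1 i1')
  have r_not: "\<forall>s\<in>{r<..<c}. f0 s \<noteq> f1 s" using rmax r by force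
  have fr: "f0 r < r" using down r(1,2) by auto
  have ir: "r < inv f0 r" using fr by (metis i0 mi0)
  show False
  proof (cases "dn < c")
    case True
    have dnac: "dn \<in> {a<..<c}" using True bd by auto
    have e1': "f0 dn < dn" using down dnac by auto
    have neg: "f0 y < f1 y" if "r < y" "y \<le> dn" for y
    proof (rule ccontr)
      assume "\<not> f0 y < f1 y"
      hence "f1 y \<le> f0 y" by simp
      have "continuous_on {y..dn} (\<lambda>x. f1 x - f0 x)"
        by (intro continuous_on_diff continuous_on_subset[OF cont1] continuous_on_subset[OF cont0]) auto
      then have "\<exists>s. y \<le> s \<and> s \<le> dn \<and> (\<lambda>x. f1 x - f0 x) s = 0"
        using \<open>f1 y \<le> f0 y\<close> that e1' fd by (intro IVT') auto
      then obtain s where s: "y \<le> s" "s \<le> dn" "f1 s = f0 s" by auto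
      have "s \<noteq> dn" using s e1' fd by auto
      then have "s \<in> {r<..<c}" using s True that by auto
      then have "f0 s \<noteq> f1 s" using r_not by blast
      with s(3) show False by simp
    qed
    have gdn: "g y < y \<and> r < g y" if "r < y" "y \<le> dn" for y
    proof
      show "g y < y" using neg[OF that] unfolding g_def by (metis i1 mi1)
      show "r < g y" using that r(3) unfolding g_def by (metis i1 m0 mi1)
    qed
    define e where "e = f0 dn"
    define q where "q n = (g ^^ n) e" for n
    have q_Suc: "q (Suc n) = g (q n)" for n by (simp add: q_def)
    have q0: "q 0 = e" by (simp add: q_def)
    have qrange: "q n \<le> e \<and> r < q n" for n
    proof (induction n)
      case 0 then show ?case using eb by (simp add: q0 e_def)
    next
      case (Suc n)
      then have "q n \<le> dn" using e1' e_def by auto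
      then show ?case using gdn[of "q n"] Suc by (auto simp: q_Suc)
    qed
    have qdec: "- q n < - q (Suc n)" for n
      using gdn[of "q n"] qrange[of n] e1' e_def by (auto simp: q_Suc)
    have qmono: "strict_mono (\<lambda>n. - q n)" by (rule strict_monoI_Suc) (rule qdec)
    have kq: "k (q n) = q n" for n
    proof (induction n)
      case 0 then show ?case by (simp add: q0 e_def k_def fd)
    next
      case (Suc n) then show ?case by (metis gk q_Suc)
    qed
    define p where "p n = inv f0 (q n)" for n
    have pfix: "f1 (p n) = p n" for n using kq[of n] unfolding k_def p_def by (metis i0)
    have pless: "p m < p n \<longleftrightarrow> n < m" for n m
      unfolding p_def using strict_mono_less[OF qmono, of n m] by simp
    have p0: "p 0 = dn" by (simp add: p_def q0 e_def)
    have p1: "p 1 \<le> bn"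
    proof (rule ccontr)
      assume "\<not> p 1 \<le> bn"
      moreover have "p 1 < dn" using pless[of 1 0] p0 by simp
      ultimately have "p 1 \<in> supp f1" using sub by auto
      then show False using pfix by (simp add: supp_def)
    qed
    define x0 where "x0 = (bn + dn)/2"
    have x0a: "bn < x0" "x0 < dn" using bd unfolding x0_def by auto
    have x0: "p 1 < x0" "x0 < dn" "f1 x0 \<noteq> x0"
      using x0a p1 sub unfolding supp_def by auto
    define w where "w n = (g ^^ n) (f0 x0)" for n
    have w_Suc: "w (Suc n) = g (w n)" for n by (simp add: w_def)
    have w0: "w 0 = f0 x0" by (simp add: w_def)
    have wq: "q (Suc n) < w n \<and> w n < q n" for n
    proof (induction n)
      case 0
      have "f0 (p 1) < f0 x0" using x0 by simp
      then have "q 1 < f0 x0" by (simp add: p_def)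
      then show ?case using x0 by (simp add: w0 q0 e_def)
    next
      case (Suc n) then show ?case by (simp add: w_Suc q_Suc[of "Suc n"] q_Suc[of n])
    qed
    have kw: "k (w n) \<noteq> w n" for n
    proof (induction n)
      case 0 then show ?case using x0 by (simp add: w0 k_def)
    next
      case (Suc n) then show ?case by (simp add: w_Suc gk[symmetric])
    qed
    define z where "z n = inv f0 (w n)" for n
    have zp: "p (Suc n) < z n \<and> z n < p n" for n using wq[of n] by (simp add: z_def p_def)
    have zfix: "f1 (z n) \<noteq> z n" for n
    proof
      assume "f1 (z n) = z n"
      then have "k (w n) = w n" by (simp add: k_def z_def)
      then show False using kw by simp
    qed
    have prange: "p n \<in> {0..1}" for n
    proof -
      have "p n \<le> dn" using pless[of n 0] p0 by (cases n) auto
      moreover have "r < p n" using qrange[of n] ir unfolding p_def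
        by (meson less_trans mi0)
      ultimately show ?thesis using a0 bd r c1 by auto
    qed
    define piece where "piece n = (SOME i. Suc i < length ts \<and> ts!i \<le> p n \<and> p n \<le> ts!Suc i)" for n
    have piece: "Suc (piece n) < length ts \<and> ts!(piece n) \<le> p n \<and> p n \<le> ts!Suc (piece n)" for n
    proof -
      have "\<exists>i. Suc i < length ts \<and> ts!i \<le> p n \<and> p n \<le> ts!Suc i" using pa prange by blast
      then show ?thesis unfolding piece_def by (rule someI_ex)
    qed
    have noteq: "piece n \<noteq> piece m" if "n < m" for n m
    proof
      assume eq: "piece n = piece m"
      obtain mm kk where aff: "\<forall>x\<in>{ts!piece n..ts!Suc (piece n)}. f1 x = mm*x+kk"
        using pa2 piece by blast
      have A1: "f1 (p n) = mm * p n + kk" using aff piece by auto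
      have A2: "f1 (p m) = mm * p m + kk" using aff piece[of m] eq by auto
      have lt: "p m < p n" using pless that by simp
      have "p m \<le> p (Suc n)" using pless[of m "Suc n"] that by (cases "Suc n = m") auto
      then have zin: "z n \<in> {ts!piece n..ts!Suc (piece n)}"
        using zp[of n] piece[of n] piece[of m] eq lt by auto
      have A3: "f1 (z n) = mm * z n + kk" using aff zin by auto
      have "mm * p n + kk = p n" "mm * p m + kk = p m" using A1 A2 pfix by auto
      then have "(mm - 1) * (p m - p n) = 0" by (simp add: algebra_simps)
      then have "mm = 1" using lt by simp
      then have "kk = 0" using A1 pfix[of n] by simp
      then show False using A3 zfix[of n] \<open>mm = 1\<close> by simp
    qed
    have "inj piece"
      unfolding inj_def by (metis noteq linorder_neq_iff)
    then have "infinite (range piece)" by (rule range_inj_infinite)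
    moreover have "range piece \<subseteq> {..<length ts}" using piece by (auto dest: Suc_lessD)
    ultimately show False using finite_subset by blast
  next
    case False
    then have dc: "dn = c" using bd by simp
    have f1c: "f1 c = c" using fd dc by simp
    have ic: "inv f0 c = c" using fc by (metis i0)
    have gc: "g c = c" using fc f1c by (metis g_def i1)
    have k2c: "k2 c = c" by (simp add: k2_def ic f1c fc)
    have kmove: "k y \<noteq> y" if "f0 bn < y" "y < c" for y
    proof
      assume ky: "k y = y"
      have "inv f0 y < c" using that ic by (metis mi0)
      moreover have "bn < inv f0 y" using that by (metis i0 mi0)
      ultimately have "f1 (inv f0 y) \<noteq> inv f0 y" using sub dc by (auto simp: supp_def)
      moreover have "f0 (f1 (inv f0 y)) = y" using ky by (simp add: k_def)
      ultimately show False by (metis i0)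
    qed
    have kb: "k (f0 bn) = f0 bn" by (simp add: k_def fb)
    have A: "f0 bn \<le> r"
    proof (rule ccontr)
      assume "\<not> f0 bn \<le> r"
      then have y0r: "r < f0 bn" by simp
      have y0c: "f0 bn < c" using bd dc fc by (metis m0)
      have "g (f0 bn) \<noteq> f0 bn" using gfix r_not y0r y0c by auto
      then consider "f0 bn < g (f0 bn)" | "g (f0 bn) < f0 bn" by linarith
      then show False
      proof cases
        case 1
        have "g (f0 bn) < c" using y0c gc by (metis gless)
        moreover have "k (g (f0 bn)) = g (f0 bn)" using gk kb by metis
        ultimately show False using kmove 1 by blast
      next
        case 2
        define y where "y = inv f0 (f1 (f0 bn))"
        have gy: "g y = f0 bn" by (simp add: y_def g_def)
        have "f0 bn < y" using 2 gy by (metis gless)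
        moreover have "y < c" using y0c gy gc by (metis gless)
        moreover have "g (k y) = g y" using gk[of y] gy kb by simp
        then have "k y = y" by simp
        ultimately show False using kmove by blast
      qed
    qed
    have k2move: "k2 r \<noteq> r"
    proof
      assume kr: "k2 r = r"
      define u where "u = inv f0 (inv f0 r)"
      have "inv f0 r < c" using r ic by (metis mi0)
      then have uc: "u < c" using ic unfolding u_def by (metis mi0)
      have "f0 bn < inv f0 r" using ir A by simp
      then have ub: "bn < u" unfolding u_def by (metis i0 mi0)
      have "f1 u \<noteq> u" using ub uc sub dc by (auto simp: supp_def)
      moreover have "f0 (f0 (f1 u)) = f0 (f0 u)" using kr by (simp add: k2_def u_def)
      ultimately show False by simp
    qed
    have gr: "g r = r" using gfix r by simp
    consider "r < k2 r" | "k2 r < r" using k2move by linarith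
    then show False
    proof cases
      case 1
      have "k2 r < c" using r k2c by (metis k2less)
      moreover have "g (k2 r) = k2 r" using gk2 gr by metis
      ultimately show False using r_not 1 gfix by auto
    next
      case 2
      define y where "y = f0 (f0 (inv f1 (inv f0 (inv f0 r))))"
      have ky: "k2 y = r" by (simp add: y_def k2_def)
      have "r < y" using 2 ky by (metis k2less)
      moreover have "y < c" using ky k2c r by (metis k2less)
      moreover have "g y = y" using gk2[of y] ky gr by simp
      ultimately show False using r_not gfix by auto
    qed
  qed
qed



lemma comm_gen:
  assumes "\<And>t. Ki (Gi (K (G t))) = t" "\<And>y. K (Ki y) = y" "\<And>y. G (Gi y) = y"
  shows "G (K x) = K (G x)"
proof -
  have "Gi (K (G x)) = K x" using assms(1)[of x] assms(2) by metis
  then have "G (Gi (K (G x))) = G (K x)" by simp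
  then show ?thesis using assms(3) by simp
qed

lemma w1: "word_val f0 f1 rel1 = (\<lambda>x. f0 (inv f1 (inv f0 (inv f0 (f1 (f0 (f1 (inv f0 (inv f1 (f0 x))))))))))"
  by (simp add: rel1_def wcomm_def wconj_def winv_def X0_def X1_def letter_val_def o_def)

lemma w2: "word_val f0 f1 rel2 = (\<lambda>x. f0 (f0 (inv f1 (inv f0 (inv f0 (inv f0 (f1 (f0 (f0 (f1 (inv f0 (inv f0 (inv f1 (f0 x))))))))))))))"
  by (simp add: rel2_def wcomm_def wconj_def winv_def X0_def X1_def letter_val_def o_def)


theorem lemma2p10:
  fixes f0 f1 :: "real \<Rightarrow> real" and a c :: real
  assumes "PL0 f0" and "PL0 f1"
    and "standard_F_copy f0 f1"
    and "orbital f0 a c"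
  shows "(\<forall>r b1 d1. up_bump f0 a c
            \<and> r \<in> {a<..<c} \<and> f0 r = f1 r
            \<and> (\<forall>s\<in>{a<..<c}. f0 s = f1 s \<longrightarrow> r \<le> s)
            \<and> orbital f1 b1 d1 \<and> {b1<..<d1} \<subseteq> {a<..<c}
            \<and> (\<forall>b d. orbital f1 b d \<and> {b<..<d} \<subseteq> {a<..<c} \<longrightarrow> b1 \<le> b)
            \<longrightarrow> f0 b1 \<ge> r)
       \<and> (\<forall>r bn dn. down_bump f0 a c
            \<and> r \<in> {a<..<c} \<and> f0 r = f1 r
            \<and> (\<forall>s\<in>{a<..<c}. f0 s = f1 s \<longrightarrow> s \<le> r)
            \<and> orbital f1 bn dn \<and> {bn<..<dn} \<subseteq> {a<..<c}
            \<and> (\<forall>b d. orbital f1 b d \<and> {b<..<d} \<subseteq> {a<..<c} \<longrightarrow> d \<le> dn)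
            \<longrightarrow> f0 dn \<le> r)"
proof -
  note P0 = PL0_props[OF assms(1)] and P1 = PL0_props[OF assms(2)]
  obtain ts where ts: "\<forall>y\<in>{0..1}. \<exists>i. Suc i < length ts \<and> ts!i \<le> y \<and> y \<le> ts!Suc i"
       "\<forall>i. Suc i < length ts \<longrightarrow> (\<exists>m k. \<forall>x\<in>{ts!i..ts!Suc i}. f1 x = m*x+k)"
    using P1(5) by blast
  have inj0: "inj f0" and inj1: "inj f1" using P0(1) P1(1) strict_mono_imp_inj_on by auto
  have i0[simp]: "\<And>x. inv f0 (f0 x) = x" using inj0 by (simp add: inv_f_f)
  have i0'[simp]: "\<And>x. f0 (inv f0 x) = x" using P0(2) by (simp add: surj_f_inv_f)
  have i1[simp]: "\<And>x. inv f1 (f1 x) = x" using inj1 by (simp add: inv_f_f)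
  have i1'[simp]: "\<And>x. f1 (inv f1 x) = x" using P1(2) by (simp add: surj_f_inv_f)
  have r1: "word_val f0 f1 rel1 = id" "word_val f0 f1 rel2 = id" using rels[OF assms(3)] by auto
  have h1: "\<And>t. f0 (inv f1 (inv f0 (inv f0 (f1 (f0 (f1 (inv f0 (inv f1 (f0 t))))))))) = t"
    using r1(1) unfolding w1 fun_eq_iff by simp
  have h2: "\<And>t. f0 (f0 (inv f1 (inv f0 (inv f0 (inv f0 (f1 (f0 (f0 (f1 (inv f0 (inv f0 (inv f1 (f0 t))))))))))))) = t"
    using r1(2) unfolding w2 fun_eq_iff by simp
  have comm1: "\<And>x. inv f1 (f0 (f0 (f1 (inv f0 x)))) = f0 (f1 (inv f0 (inv f1 (f0 x))))"
    using comm_gen[of "\<lambda>y. f0 (inv f1 (inv f0 y))" "\<lambda>y. inv f0 (f1 y)" "\<lambda>x. f0 (f1 (inv f0 x))" "\<lambda>x. inv f1 (f0 x)"] h1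
    by simp
  have comm2: "\<And>x. inv f1 (f0 (f0 (f0 (f1 (inv f0 (inv f0 x)))))) = f0 (f0 (f1 (inv f0 (inv f0 (inv f1 (f0 x))))))"
    using comm_gen[of "\<lambda>y. f0 (f0 (inv f1 (inv f0 (inv f0 y))))" "\<lambda>y. inv f0 (f1 y)" "\<lambda>x. f0 (f0 (f1 (inv f0 (inv f0 x))))" "\<lambda>x. inv f1 (f0 x)"] h2
    by simp
  have orb: "a < c" "{a<..<c} \<in> components (supp f0)" using assms(4) unfolding orbital_def by auto
  have fac: "f0 a = a" "f0 c = c" using comp_endpoints[OF P0(3) orb(2) orb(1)] by auto
  have sub0: "{a<..<c} \<subseteq> {0<..<1}" using orb(2) in_components_subset P0(4) by blast
  have a0: "0 \<le> a"
  proof (rule ccontr)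
    assume na: "\<not> 0 \<le> a"
    then have "(a + min c 0)/2 \<in> {a<..<c}" using orb(1) by (auto simp: min_def)
    then have "(a + min c 0)/2 \<in> {0<..<1}" using sub0 by blast
    then show False using na by (auto simp: min_def split: if_splits)
  qed
  have c1: "c \<le> 1"
  proof (rule ccontr)
    assume na: "\<not> c \<le> 1"
    then have "(c + max a 1)/2 \<in> {a<..<c}" using orb(1) by (auto simp: max_def)
    then have "(c + max a 1)/2 \<in> {0<..<1}" using sub0 by blast
    then show False using na by (auto simp: max_def split: if_splits)
  qed
  show ?thesis
  proof (intro conjI allI impI)
    fix r b1 d1
    assume H: "up_bump f0 a c
            \<and> r \<in> {a<..<c} \<and> f0 r = f1 r
            \<and> (\<forall>s\<in>{a<..<c}. f0 s = f1 s \<longrightarrow> r \<le> s)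
            \<and> orbital f1 b1 d1 \<and> {b1<..<d1} \<subseteq> {a<..<c}
            \<and> (\<forall>b d. orbital f1 b d \<and> {b<..<d} \<subseteq> {a<..<c} \<longrightarrow> b1 \<le> b)"
    have o1: "b1 < d1" "{b1<..<d1} \<in> components (supp f1)" using H unfolding orbital_def by auto
    have fe: "f1 b1 = b1" "f1 d1 = d1" using comp_endpoints[OF P1(3) o1(2) o1(1)] by auto
    have sub: "{b1<..<d1} \<subseteq> supp f1" using o1(2) in_components_subset by blast
    have bd: "a \<le> b1" "d1 \<le> c" using H o1(1) greaterThanLessThan_subseteq_greaterThanLessThan by auto
    show "r \<le> f0 b1"
      by (rule core_up[OF P0(1) P1(1) P0(2) P1(2) P0(3) P1(3) comm1 comm2 ts(1) ts(2)])
        (use H fac fe sub bd o1 a0 c1 in \<open>auto simp: up_bump_def\<close>)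
  next
    fix r bn dn
    assume H: "down_bump f0 a c
            \<and> r \<in> {a<..<c} \<and> f0 r = f1 r
            \<and> (\<forall>s\<in>{a<..<c}. f0 s = f1 s \<longrightarrow> s \<le> r)
            \<and> orbital f1 bn dn \<and> {bn<..<dn} \<subseteq> {a<..<c}
            \<and> (\<forall>b d. orbital f1 b d \<and> {b<..<d} \<subseteq> {a<..<c} \<longrightarrow> d \<le> dn)"
    have o1: "bn < dn" "{bn<..<dn} \<in> components (supp f1)" using H unfolding orbital_def by auto
    have fe: "f1 bn = bn" "f1 dn = dn" using comp_endpoints[OF P1(3) o1(2) o1(1)] by auto
    have sub: "{bn<..<dn} \<subseteq> supp f1" using o1(2) in_components_subset by blast
    have bd: "a \<le> bn" "dn \<le> c" using H o1(1) greaterThanLessThan_subseteq_greaterThanLessThan by auto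
    show "f0 dn \<le> r"
      by (rule core_down[OF P0(1) P1(1) P0(2) P1(2) P0(3) P1(3) comm1 comm2 ts(1) ts(2)])
        (use H fac fe sub bd o1 a0 c1 in \<open>auto simp: down_bump_def\<close>)
  qed
qed


end
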